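(* Let $q\ge2$, $r\ge1$, $\rho\ge2$, $s\ge1$ be integers, $N=r+\rho-1$, $n=sN$, and $\mathcal{R}_{t+1}=\{tN+1,\dots,(t+1)N\}$ for $t=0,\dots,s-1$. Let $\mathcal{C}\subseteq Q^n$ ($|Q|=q$) be a code with minimum distance $d$ such that $\mathcal{C}|_{\mathcal{R}_i}$ has minimum distance at least $\rho$ for all $i$. Let $T:=\{\mathbf{i}=(i_1,\dots,i_s)\mid i_1+\cdots+i_s\ge d,\ i_j\in\{0,\rho,\rho+1,\dots,N\}\ \forall j\}$. Let $f(\mathbf{x})=f(x_1,\dots,x_s)$ be a polynomial of the form $$f(\mathbf{x})=1+\sum_{\mathbf{j}\in\{0,\dots,N\}^s\setminus\{\underline0\}}f_{\mathbf{j}}K^{(N)}_{\mathbf{j}}(\mathbf{x})$$ with (i) $f_{\mathbf{j}}\ge0$ for all $\mathbf{j}\in\{0,\dots,N\}^s\setminus\{\underline0\}$ and (ii) $f(\mathbf{i})\le0$ for all $\mathbf{i}\in T$. Then $|\mathcal{C}|\le f(\underline0)$.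
   Context: The Krawtchouk polynomial is $K_j^{(N)}(x)=\sum_{l=0}^j(-1)^l(q-1)^{j-l}\binom xl\binom{N-x}{j-l}$, and $K^{(N)}_{\mathbf{j}}(\mathbf{x})=\prod_{p=1}^sK^{(N)}_{j_p}(x_p)$ for $\mathbf{j}=(j_1,\dots,j_s)$; $\underline0=(0,\dots,0)$. Minimum distance refers to Hamming distance; $\mathcal{C}|_{\mathcal{R}_i}$ is the projection onto coordinates in $\mathcal{R}_i$. *)

theory Defs
  imports Complex_Main "HOL-Library.FuncSet"
begin

text \<open>Words of length n over alphabet Q are lists; positions are 0-indexed,
  so the block R_{t+1} = {tN+1,...,(t+1)N} corresponds to positions tN ..< (t+1)N.\<close>

definition hamming_dist :: "'a list \<Rightarrow> 'a list \<Rightarrow> nat" where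
  "hamming_dist u v = card {i. i < length u \<and> u ! i \<noteq> v ! i}"

definition min_distance :: "'a list set \<Rightarrow> nat" where
  "min_distance C = Min {hamming_dist u v | u v. u \<in> C \<and> v \<in> C \<and> u \<noteq> v}"

definition block_proj :: "nat \<Rightarrow> nat \<Rightarrow> 'a list \<Rightarrow> 'a list" where
  "block_proj N t w = take N (drop (t * N) w)"

definition proj_code :: "nat \<Rightarrow> nat \<Rightarrow> 'a list set \<Rightarrow> 'a list set" where
  "proj_code N t C = block_proj N t ` C"

definition krawtchouk :: "nat \<Rightarrow> nat \<Rightarrow> nat \<Rightarrow> nat \<Rightarrow> real" where
  "krawtchouk q N j x = (\<Sum>l\<le>j. (-1) ^ l * (real q - 1) ^ (j - l)
      * real (x choose l) * real ((N - x) choose (j - l)))"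

definition krawtchouk_multi :: "nat \<Rightarrow> nat \<Rightarrow> nat \<Rightarrow> (nat \<Rightarrow> nat) \<Rightarrow> (nat \<Rightarrow> nat) \<Rightarrow> real" where
  "krawtchouk_multi q N s j x = (\<Prod>p<s. krawtchouk q N (j p) (x p))"

definition zero_vec :: "nat \<Rightarrow> nat \<Rightarrow> nat" where
  "zero_vec s = restrict (\<lambda>_. 0) {..<s}"

end

theory Submission
  imports Defs
begin


lemma kraw_A:
  assumes "x \<le> m"
  shows "krawtchouk q (Suc m) (Suc j) x = krawtchouk q m (Suc j) x + (real q - 1) * krawtchouk q m j x"
proof -
  have sm: "Suc m - x = Suc (m - x)" using assms by simp
  define a where "a l = (-1::real) ^ l * real (x choose l)" for l
  have "krawtchouk q (Suc m) (Suc j) x = (\<Sum>l\<le>Suc j. a l * (real q - 1) ^ (Suc j - l) * real (Suc (m-x) choose (Suc j - l)))"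
    unfolding krawtchouk_def a_def sm by (intro sum.cong) auto
  also have "\<dots> = (\<Sum>l\<le>j. a l * (real q - 1) ^ (Suc j - l) * real (Suc (m-x) choose (Suc j - l))) + a (Suc j)"
    by simp
  also have "(\<Sum>l\<le>j. a l * (real q - 1) ^ (Suc j - l) * real (Suc (m-x) choose (Suc j - l)))
     = (\<Sum>l\<le>j. a l * (real q - 1) ^ (Suc j - l) * real ((m-x) choose (Suc j - l)))
       + (real q - 1) * (\<Sum>l\<le>j. a l * (real q - 1) ^ (j - l) * real ((m-x) choose (j - l)))"
    unfolding sum_distrib_left sum.distrib[symmetric]
  proof (intro sum.cong refl)
    fix l assume "l \<in> {..j}"
    then have e: "Suc j - l = Suc (j - l)" by auto
    show "a l * (real q - 1) ^ (Suc j - l) * real (Suc (m-x) choose (Suc j - l)) =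
        a l * (real q - 1) ^ (Suc j - l) * real ((m-x) choose (Suc j - l)) +
        (real q - 1) * (a l * (real q - 1) ^ (j - l) * real ((m-x) choose (j - l)))"
      unfolding e by (simp add: algebra_simps)
  qed
  also have "krawtchouk q m (Suc j) x = (\<Sum>l\<le>j. a l * (real q - 1) ^ (Suc j - l) * real ((m-x) choose (Suc j - l))) + a (Suc j)"
    unfolding krawtchouk_def a_def by (simp add: mult_ac)
  moreover have "krawtchouk q m j x = (\<Sum>l\<le>j. a l * (real q - 1) ^ (j - l) * real ((m-x) choose (j - l)))"
    unfolding krawtchouk_def a_def by (intro sum.cong) auto
  ultimately show ?thesis by simp
qed

lemma kraw_B:
  assumes "x \<le> m"
  shows "krawtchouk q (Suc m) (Suc j) (Suc x) = krawtchouk q m (Suc j) x - krawtchouk q m j x"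
proof -
  define b where "b l = (real q - 1) ^ (Suc j - l) * real ((m - x) choose (Suc j - l))" for l
  have "krawtchouk q (Suc m) (Suc j) (Suc x) = (\<Sum>l\<le>Suc j. (-1) ^ l * real (Suc x choose l) * b l)"
    unfolding krawtchouk_def b_def by (intro sum.cong) auto
  also have "\<dots> = (\<Sum>l\<le>Suc j. (-1) ^ l * real (x choose l) * b l)
       + (\<Sum>l\<le>Suc j. (-1) ^ l * real (if l = 0 then 0 else x choose (l - 1)) * b l)"
    unfolding sum.distrib[symmetric]
  proof (intro sum.cong refl)
    fix l assume "l \<in> {..Suc j}"
    show "(-1) ^ l * real (Suc x choose l) * b l = (-1) ^ l * real (x choose l) * b l +
       (-1) ^ l * real (if l = 0 then 0 else x choose (l - 1)) * b l"
      by (cases l) (auto simp: algebra_simps)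
  qed
  also have "(\<Sum>l\<le>Suc j. (-1) ^ l * real (if l = 0 then 0 else x choose (l - 1)) * b l)
      = (\<Sum>l\<le>j. (-1) ^ Suc l * real (x choose l) * b (Suc l))"
    by (subst sum.atMost_Suc_shift) simp
  also have "\<dots> = - krawtchouk q m j x"
    unfolding krawtchouk_def b_def sum_negf[symmetric] by (intro sum.cong) auto
  also have "(\<Sum>l\<le>Suc j. (-1) ^ l * real (x choose l) * b l) = krawtchouk q m (Suc j) x"
    unfolding krawtchouk_def b_def by (intro sum.cong) auto
  finally show ?thesis by simp
qed

lemma hd_Nil[simp]: "hamming_dist [] v = 0"
  unfolding hamming_dist_def by simp

lemma hd_Cons: "hamming_dist (a # u) (b # v) = (if a = b then 0 else 1) + hamming_dist u v"
proof -
  have e: "{i. i < length (a # u) \<and> (a # u) ! i \<noteq> (b # v) ! i}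
     = (if a = b then {} else {0}) \<union> Suc ` {i. i < length u \<and> u ! i \<noteq> v ! i}"
  proof (rule set_eqI)
    fix i show "i \<in> {i. i < length (a # u) \<and> (a # u) ! i \<noteq> (b # v) ! i} \<longleftrightarrow>
      i \<in> (if a = b then {} else {0}) \<union> Suc ` {i. i < length u \<and> u ! i \<noteq> v ! i}"
      by (cases i) auto
  qed
  show ?thesis unfolding hamming_dist_def e
    by (subst card_Un_disjoint) (auto simp: card_image)
qed

lemma hd_le: "hamming_dist u v \<le> length u"
  unfolding hamming_dist_def by (rule order_trans[OF card_mono[of "{..<length u}"]]) auto

lemma hd_self[simp]: "hamming_dist u u = 0"
  unfolding hamming_dist_def by simp

lemma hd_append: "length x = length x' \<Longrightarrow> hamming_dist (x @ y) (x' @ y') = hamming_dist x x' + hamming_dist y y'"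
proof (induction x arbitrary: x')
  case Nil then show ?case by simp
next
  case (Cons a x) then show ?case by (cases x') (auto simp: hd_Cons)
qed



definition ee :: "nat \<Rightarrow> 'a \<Rightarrow> 'a \<Rightarrow> real" where
  "ee q c a = (if a = c then real q - 1 else -1)"

lemma ee_sum:
  assumes "finite Q" "a \<in> Q" "b \<in> Q"
  shows "(\<Sum>c\<in>Q. ee (card Q) c a * ee (card Q) c b) = real (card Q) * ((if a = b then real (card Q) else 0) - 1)"
proof -
  let ?q = "real (card Q)"
  have "(\<Sum>c\<in>Q. ee (card Q) c a * ee (card Q) c b) = (\<Sum>c\<in>Q. ?q * ?q * (if a = b \<and> c = a then 1 else 0)
      - ?q * (if c = a then 1 else 0) - ?q * (if c = b then 1 else 0) + 1)"
    by (intro sum.cong) (auto simp: ee_def algebra_simps)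
  also have "\<dots> = ?q * ((if a = b then ?q else 0) - 1)"
    using assms by (cases "a = b") (simp_all add: sum.distrib sum_subtractf sum_distrib_left[symmetric] algebra_simps)
  finally show ?thesis .
qed

definition gram_rep :: "'a set \<Rightarrow> nat \<Rightarrow> nat \<Rightarrow> 'a option list set \<Rightarrow> ('a option list \<Rightarrow> 'a list \<Rightarrow> real) \<Rightarrow> bool" where
  "gram_rep Q m j I \<phi> \<longleftrightarrow> finite I \<and> (\<forall>u v. length u = m \<longrightarrow> length v = m \<longrightarrow> set u \<subseteq> Q \<longrightarrow> set v \<subseteq> Q \<longrightarrow>
      krawtchouk (card Q) m j (hamming_dist u v) = (\<Sum>i\<in>I. \<phi> i u * \<phi> i v))"

lemma kraw0[simp]: "krawtchouk q m 0 x = 1"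
  unfolding krawtchouk_def by simp

lemma gram_exists:
  assumes "finite Q" "Q \<noteq> {}"
  shows "\<exists>I \<phi>. gram_rep Q m j I \<phi>"
proof (induction m arbitrary: j)
  case 0
  show ?case
  proof (cases j)
    case 0 then show ?thesis
      by (intro exI[of _ "{[]}"] exI[of _ "\<lambda>_ _. 1"]) (auto simp: gram_rep_def)
  next
    case (Suc j') then show ?thesis
      by (intro exI[of _ "{}"] exI[of _ "\<lambda>_ _. 1"]) (auto simp: gram_rep_def krawtchouk_def intro!: sum.neutral)
  qed
next
  case (Suc m)
  show ?case
  proof (cases j)
    case 0 then show ?thesis
      by (intro exI[of _ "{[]}"] exI[of _ "\<lambda>_ _. 1"]) (auto simp: gram_rep_def)
  next
    case (Suc j')
    obtain I1 \<phi>1 where r1: "gram_rep Q m (Suc j') I1 \<phi>1" using Suc.IH by blast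
    obtain I2 \<phi>2 where r2: "gram_rep Q m j' I2 \<phi>2" using Suc.IH by blast
    let ?q = "card Q"
    have qpos: "real ?q > 0" using assms by (simp add: card_gt_0_iff)
    define I where "I = (Cons None) ` I1 \<union> (\<lambda>(c,i). Some c # i) ` (Q \<times> I2)"
    define \<phi> where "\<phi> idx w = (case idx of None # i \<Rightarrow> \<phi>1 i (tl w)
        | Some c # i \<Rightarrow> ee ?q c (hd w) / sqrt ?q * \<phi>2 i (tl w) | [] \<Rightarrow> 0)" for idx w
    have fin: "finite I" using r1 r2 assms unfolding I_def gram_rep_def by auto
    have "krawtchouk ?q (Suc m) j (hamming_dist u v) = (\<Sum>i\<in>I. \<phi> i u * \<phi> i v)"
      if u: "length u = Suc m" "set u \<subseteq> Q" and v: "length v = Suc m" "set v \<subseteq> Q" for u v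
    proof -
      obtain a u' where ua: "u = a # u'" using u by (cases u) auto
      obtain b v' where vb: "v = b # v'" using v by (cases v) auto
      have ab: "a \<in> Q" "b \<in> Q" "set u' \<subseteq> Q" "set v' \<subseteq> Q" "length u' = m" "length v' = m"
        using u v ua vb by auto
      have xm: "hamming_dist u' v' \<le> m" using hd_le[of u' v'] ab by simp
      have K1: "krawtchouk ?q m (Suc j') (hamming_dist u' v') = (\<Sum>i\<in>I1. \<phi>1 i u' * \<phi>1 i v')"
        using r1 ab unfolding gram_rep_def by blast
      have K2: "krawtchouk ?q m j' (hamming_dist u' v') = (\<Sum>i\<in>I2. \<phi>2 i u' * \<phi>2 i v')"
        using r2 ab unfolding gram_rep_def by blast
      have "(\<Sum>i\<in>I. \<phi> i u * \<phi> i v) = (\<Sum>i\<in>Cons None ` I1. \<phi> i u * \<phi> i v)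
          + (\<Sum>i\<in>(\<lambda>(c,i). Some c # i) ` (Q \<times> I2). \<phi> i u * \<phi> i v)"
        unfolding I_def using r1 r2 assms by (intro sum.union_disjoint) (auto simp: gram_rep_def)
      also have "(\<Sum>i\<in>Cons None ` I1. \<phi> i u * \<phi> i v) = (\<Sum>i\<in>I1. \<phi>1 i u' * \<phi>1 i v')"
        by (subst sum.reindex) (auto simp: inj_on_def \<phi>_def ua vb)
      also have "(\<Sum>i\<in>(\<lambda>(c,i). Some c # i) ` (Q \<times> I2). \<phi> i u * \<phi> i v)
          = (\<Sum>(c,i)\<in>Q \<times> I2. ee ?q c a * ee ?q c b / ?q * (\<phi>2 i u' * \<phi>2 i v'))"
      proof (subst sum.reindex)
        show "inj_on (\<lambda>(c,i). Some c # i) (Q \<times> I2)" by (auto simp: inj_on_def)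
        show "sum ((\<lambda>i. \<phi> i u * \<phi> i v) \<circ> (\<lambda>(c,i). Some c # i)) (Q \<times> I2) =
          (\<Sum>(c,i)\<in>Q \<times> I2. ee ?q c a * ee ?q c b / ?q * (\<phi>2 i u' * \<phi>2 i v'))"
          using qpos by (intro sum.cong) (auto simp: \<phi>_def ua vb field_simps)
      qed
      also have "\<dots> = (\<Sum>c\<in>Q. ee ?q c a * ee ?q c b) / ?q * (\<Sum>i\<in>I2. \<phi>2 i u' * \<phi>2 i v')"
        apply (simp add: sum.cartesian_product[symmetric] sum_distrib_left sum_distrib_right sum_divide_distrib)
        by (rule sum.swap)
      finally have S: "(\<Sum>i\<in>I. \<phi> i u * \<phi> i v) = krawtchouk ?q m (Suc j') (hamming_dist u' v')
          + ((if a = b then real ?q else 0) - 1) * krawtchouk ?q m j' (hamming_dist u' v')"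
        using qpos by (simp add: K1 K2 ee_sum[OF assms(1) ab(1,2)])
      show ?thesis
      proof (cases "a = b")
        case True
        then show ?thesis using S kraw_A[OF xm] by (simp add: ua vb hd_Cons Suc)
      next
        case False
        then show ?thesis using S kraw_B[OF xm] by (simp add: ua vb hd_Cons Suc)
      qed
    qed
    then show ?thesis using fin unfolding gram_rep_def by blast
  qed
qed



lemma blocks_sum:
  "length u = s * N \<Longrightarrow> length v = s * N \<Longrightarrow>
   hamming_dist u v = (\<Sum>p<s. hamming_dist (block_proj N p u) (block_proj N p v))"
proof (induction s arbitrary: u v)
  case 0 then show ?case by simp
next
  case (Suc s)
  have "hamming_dist u v = hamming_dist (take N u @ drop N u) (take N v @ drop N v)" by simp
  also have "\<dots> = hamming_dist (take N u) (take N v) + hamming_dist (drop N u) (drop N v)"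
    using Suc.prems by (intro hd_append) simp
  also have "hamming_dist (drop N u) (drop N v) = (\<Sum>p<s. hamming_dist (block_proj N p (drop N u)) (block_proj N p (drop N v)))"
    using Suc.prems by (intro Suc.IH) auto
  finally show ?case
    by (subst sum.lessThan_Suc_shift) (simp add: block_proj_def drop_drop add.commute del: sum.lessThan_Suc)
qed

lemma block_len:
  assumes "length u = s * N" "p < s"
  shows "length (block_proj N p u) = N"
proof -
  have "Suc p * N \<le> s * N" using assms(2) by (intro mult_le_mono1) simp
  then show ?thesis using assms unfolding block_proj_def by simp
qed

lemma block_set: "set (block_proj N p u) \<subseteq> set u"
  unfolding block_proj_def by (meson order_trans set_drop_subset set_take_subset)

lemma kraw_at0_nonneg:
  assumes "q \<ge> 1" shows "krawtchouk q N j 0 \<ge> 0"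
  unfolding krawtchouk_def
proof (intro sum_nonneg)
  fix l assume "l \<in> {..j}"
  show "0 \<le> (-1) ^ l * (real q - 1) ^ (j - l) * real (0 choose l) * real ((N - 0) choose (j - l))"
    using assms by (cases l) auto
qed



lemma kernel_pos:
  fixes C :: "'a list set"
  assumes fQ: "finite Q" "Q \<noteq> {}" and fC: "finite C"
    and lens: "\<forall>c\<in>C. length c = s * N \<and> set c \<subseteq> Q"
  shows "0 \<le> (\<Sum>u\<in>C. \<Sum>v\<in>C. \<Prod>p<s. krawtchouk (card Q) N (j p)
             (hamming_dist (block_proj N p u) (block_proj N p v)))"
proof -
  have "\<forall>jj. \<exists>z. gram_rep Q N jj (fst z) (snd z)"
    using gram_exists[OF fQ] by fastforce
  then obtain F where F: "\<And>jj. gram_rep Q N jj (fst (F jj)) (snd (F jj))" by (metis choice)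
  define I where "I p = fst (F (j p))" for p
  define \<phi> where "\<phi> p = snd (F (j p))" for p
  define G where "G = PiE {..<s} I"
  define \<Psi> where "\<Psi> g u = (\<Prod>p<s. \<phi> p (g p) (block_proj N p u))" for g u
  have finI: "finite (I p)" for p using F unfolding I_def gram_rep_def by blast
  have eq: "(\<Prod>p<s. krawtchouk (card Q) N (j p) (hamming_dist (block_proj N p u) (block_proj N p v)))
      = (\<Sum>g\<in>G. \<Psi> g u * \<Psi> g v)" if u: "u \<in> C" and v: "v \<in> C" for u v
  proof -
    have "(\<Prod>p<s. krawtchouk (card Q) N (j p) (hamming_dist (block_proj N p u) (block_proj N p v)))
        = (\<Prod>p<s. \<Sum>i\<in>I p. \<phi> p i (block_proj N p u) * \<phi> p i (block_proj N p v))"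
    proof (intro prod.cong refl)
      fix p assume p: "p \<in> {..<s}"
      have lu: "length u = s * N" "set u \<subseteq> Q" using lens u by blast+
      have lv: "length v = s * N" "set v \<subseteq> Q" using lens v by blast+
      have p': "p < s" using p by simp
      have R: "\<forall>u v. length u = N \<longrightarrow> length v = N \<longrightarrow> set u \<subseteq> Q \<longrightarrow> set v \<subseteq> Q \<longrightarrow>
      krawtchouk (card Q) N (j p) (hamming_dist u v) = (\<Sum>i\<in>I p. \<phi> p i u * \<phi> p i v)"
        using F[of "j p"] unfolding gram_rep_def I_def \<phi>_def by (elim conjE)
      show "krawtchouk (card Q) N (j p) (hamming_dist (block_proj N p u) (block_proj N p v))
          = (\<Sum>i\<in>I p. \<phi> p i (block_proj N p u) * \<phi> p i (block_proj N p v))"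
        by (rule R[rule_format, OF block_len[OF lu(1) p'] block_len[OF lv(1) p']
              order_trans[OF block_set lu(2)] order_trans[OF block_set lv(2)]])
    qed
    also have "\<dots> = (\<Sum>g\<in>G. \<Prod>p<s. \<phi> p (g p) (block_proj N p u) * \<phi> p (g p) (block_proj N p v))"
      unfolding G_def by (rule prod_sum_PiE) (auto simp: finI)
    also have "\<dots> = (\<Sum>g\<in>G. \<Psi> g u * \<Psi> g v)"
      unfolding \<Psi>_def by (simp add: prod.distrib)
    finally show ?thesis .
  qed
  have "(\<Sum>u\<in>C. \<Sum>v\<in>C. \<Prod>p<s. krawtchouk (card Q) N (j p)
             (hamming_dist (block_proj N p u) (block_proj N p v)))
      = (\<Sum>u\<in>C. \<Sum>v\<in>C. \<Sum>g\<in>G. \<Psi> g u * \<Psi> g v)"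
    using eq by simp
  also have "\<dots> = (\<Sum>u\<in>C. \<Sum>g\<in>G. \<Sum>v\<in>C. \<Psi> g u * \<Psi> g v)"
    by (rule sum.cong[OF refl], rule sum.swap)
  also have "\<dots> = (\<Sum>g\<in>G. \<Sum>u\<in>C. \<Sum>v\<in>C. \<Psi> g u * \<Psi> g v)"
    by (rule sum.swap)
  also have "\<dots> = (\<Sum>g\<in>G. (\<Sum>u\<in>C. \<Psi> g u) * (\<Sum>v\<in>C. \<Psi> g v))"
    by (simp add: sum_product)
  also have "\<dots> \<ge> 0" by (intro sum_nonneg) simp
  finally show ?thesis by simp
qed



theorem corollary3:
  fixes q r \<rho> s N n d :: nat
    and Q :: "'a set"
    and C :: "'a list set"
    and fc :: "(nat \<Rightarrow> nat) \<Rightarrow> real"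
    and f :: "(nat \<Rightarrow> nat) \<Rightarrow> real"
  assumes "q \<ge> 2" "r \<ge> 1" "\<rho> \<ge> 2" "s \<ge> 1"
    and "N = r + \<rho> - 1" "n = s * N"
    and "finite Q" "card Q = q"
    and "\<forall>c\<in>C. length c = n \<and> set c \<subseteq> Q"
    and "d = min_distance C"
    and "\<forall>t<s. \<forall>u\<in>proj_code N t C. \<forall>v\<in>proj_code N t C. u \<noteq> v \<longrightarrow> hamming_dist u v \<ge> \<rho>"
    and "f = (\<lambda>x. 1 + (\<Sum>j \<in> (PiE {..<s} (\<lambda>_. {0..N})) - {zero_vec s}.
                 fc j * krawtchouk_multi q N s j x))"
    and "\<forall>j \<in> (PiE {..<s} (\<lambda>_. {0..N})) - {zero_vec s}. fc j \<ge> 0"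
    and "\<forall>i \<in> {i \<in> PiE {..<s} (\<lambda>_. {0} \<union> {\<rho>..N}). (\<Sum>p<s. i p) \<ge> d}. f i \<le> 0"
  shows "real (card C) \<le> f (zero_vec s)"
proof -
  note A = assms
  define J where "J = (PiE {..<s} (\<lambda>_. {0..N})) - {zero_vec s}"
  define B where "B p u = block_proj N p u" for p and u :: "'a list"
  define dv where "dv u v = restrict (\<lambda>p. hamming_dist (B p u) (B p v)) {..<s}" for u v
  have fQ: "finite Q" "Q \<noteq> {}" using A(1,7,8) by auto
  have lens: "\<forall>c\<in>C. length c = s * N \<and> set c \<subseteq> Q" using A(6,9) by simp
  have fC: "finite C"
    by (rule finite_subset[OF _ finite_lists_length_eq[OF fQ(1), of n]]) (use A(9) in auto)
  have finJ: "finite J" unfolding J_def by (auto intro: finite_PiE)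
  have fdef: "f x = 1 + (\<Sum>j\<in>J. fc j * krawtchouk_multi q N s j x)" for x
    using A(12) J_def by simp
  have fcpos: "\<And>j. j \<in> J \<Longrightarrow> fc j \<ge> 0" using A(13) J_def by simp
  have Km: "krawtchouk_multi q N s j (dv u v) = (\<Prod>p<s. krawtchouk (card Q) N (j p)
             (hamming_dist (block_proj N p u) (block_proj N p v)))" for j u v
    unfolding krawtchouk_multi_def dv_def B_def A(8) by (intro prod.cong) auto
  have P: "0 \<le> (\<Sum>u\<in>C. \<Sum>v\<in>C. krawtchouk_multi q N s j (dv u v))" for j
    unfolding Km using kernel_pos[OF fQ fC lens] .
  have E1: "(\<Sum>u\<in>C. \<Sum>v\<in>C. f (dv u v)) = (\<Sum>u\<in>C. \<Sum>v\<in>C. 1) + (\<Sum>u\<in>C. \<Sum>v\<in>C. \<Sum>j\<in>J. fc j * krawtchouk_multi q N s j (dv u v))"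
    by (simp add: fdef sum.distrib)
  have E2: "(\<Sum>u\<in>C. \<Sum>v\<in>C. \<Sum>j\<in>J. fc j * krawtchouk_multi q N s j (dv u v))
     = (\<Sum>j\<in>J. fc j * (\<Sum>u\<in>C. \<Sum>v\<in>C. krawtchouk_multi q N s j (dv u v)))"
  proof -
    have "(\<Sum>u\<in>C. \<Sum>v\<in>C. \<Sum>j\<in>J. fc j * krawtchouk_multi q N s j (dv u v))
       = (\<Sum>u\<in>C. \<Sum>j\<in>J. \<Sum>v\<in>C. fc j * krawtchouk_multi q N s j (dv u v))"
      by (rule sum.cong[OF refl], rule sum.swap)
    also have "\<dots> = (\<Sum>j\<in>J. \<Sum>u\<in>C. \<Sum>v\<in>C. fc j * krawtchouk_multi q N s j (dv u v))"
      by (rule sum.swap)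
    also have "\<dots> = (\<Sum>j\<in>J. fc j * (\<Sum>u\<in>C. \<Sum>v\<in>C. krawtchouk_multi q N s j (dv u v)))"
      by (simp only: sum_distrib_left)
    finally show ?thesis .
  qed
  have E3: "(\<Sum>j\<in>J. fc j * (\<Sum>u\<in>C. \<Sum>v\<in>C. krawtchouk_multi q N s j (dv u v))) \<ge> 0"
  proof (rule sum_nonneg)
    fix j assume "j \<in> J"
    then show "0 \<le> fc j * (\<Sum>u\<in>C. \<Sum>v\<in>C. krawtchouk_multi q N s j (dv u v))"
      by (intro mult_nonneg_nonneg[OF fcpos P])
  qed
  have low: "real (card C) * real (card C) \<le> (\<Sum>u\<in>C. \<Sum>v\<in>C. f (dv u v))"
    using E1 E2 E3 by simp
  have dvself: "dv u u = zero_vec s" for u unfolding dv_def zero_vec_def by simp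
  have neg: "f (dv u v) \<le> 0" if u: "u \<in> C" and v: "v \<in> C" and uv: "u \<noteq> v" for u v
  proof -
    have lu: "length u = s * N" "length v = s * N" using lens u v by auto
    have mem: "dv u v \<in> PiE {..<s} (\<lambda>_. {0} \<union> {\<rho>..N})"
      unfolding dv_def
    proof (subst restrict_PiE_iff, intro ballI)
      fix p assume "p \<in> {..<s}"
      then have p: "p < s" by simp
      have le: "hamming_dist (B p u) (B p v) \<le> N"
        using hd_le[of "B p u" "B p v"] block_len[OF lu(1) p] B_def by simp
      show "hamming_dist (B p u) (B p v) \<in> {0} \<union> {\<rho>..N}"
      proof (cases "B p u = B p v")
        case True then show ?thesis by simp
      next
        case False
        have "B p u \<in> proj_code N p C" "B p v \<in> proj_code N p C"
          using u v unfolding proj_code_def B_def by auto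
        then have "hamming_dist (B p u) (B p v) \<ge> \<rho>" using A(11) p False by blast
        then show ?thesis using le by simp
      qed
    qed
    have fin: "finite {hamming_dist u v | u v. u \<in> C \<and> v \<in> C \<and> u \<noteq> v}"
      by (rule finite_subset[of _ "(\<lambda>(u,v). hamming_dist u v) ` (C \<times> C)"]) (use fC in auto)
    have "d \<le> hamming_dist u v" unfolding A(10) min_distance_def
      by (rule Min_le[OF fin]) (use u v uv in blast)
    also have "hamming_dist u v = (\<Sum>p<s. dv u v p)"
      unfolding blocks_sum[OF lu] dv_def B_def by simp
    finally show ?thesis using A(14) mem by blast
  qed
  have "(\<Sum>u\<in>C. \<Sum>v\<in>C. f (dv u v)) \<le> (\<Sum>u\<in>C. f (zero_vec s))"
  proof (intro sum_mono)
    fix u assume u: "u \<in> C"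
    have "(\<Sum>v\<in>C. f (dv u v)) = f (dv u u) + (\<Sum>v\<in>C - {u}. f (dv u v))"
      using fC u by (simp add: sum.remove)
    also have "(\<Sum>v\<in>C - {u}. f (dv u v)) \<le> 0" using neg u by (intro sum_nonpos) auto
    finally show "(\<Sum>v\<in>C. f (dv u v)) \<le> f (zero_vec s)" by (simp add: dvself)
  qed
  then have up: "real (card C) * real (card C) \<le> real (card C) * f (zero_vec s)"
    using low by simp
  have f0: "f (zero_vec s) \<ge> 1"
  proof -
    have "krawtchouk_multi q N s j (zero_vec s) \<ge> 0" for j
      unfolding krawtchouk_multi_def zero_vec_def
      using A(1) by (intro prod_nonneg) (auto intro: kraw_at0_nonneg)
    then show ?thesis unfolding fdef using fcpos by (simp add: sum_nonneg)
  qed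
  show ?thesis
  proof (cases "card C = 0")
    case True then show ?thesis using f0 by simp
  next
    case False then show ?thesis using up by simp
  qed
qed

end
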